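(* Let $S$ be a monoid, $A$ an $S$-act and $\Sigma=\Sigma(X)$ a consistent set of equations over $A$; identify $A$ with its image in $A(\Sigma)$ under $\nu_\Sigma$. The following are equivalent: (1) $\Sigma$ has a solution in $A$; (2) $A$ is a retract of $A(\Sigma)$; (3) the $S$-morphism $\theta:D(\Sigma)\to A$, $([xs]v)\theta=av$ for $xs=a\in\Sigma$, $v\in S$, extends to an $S$-morphism $C(\Sigma)\to A$.
   Context: A (right) $S$-act is a set $A$ with a map $A\times S\to A$ such that $a1=a$, $a(st)=(as)t$. $F_S(X)$ is the free $S$-act on $X$. An equation over $A$ with variables from $X$ has one of the forms $xs=yt$, $xs=xt$, $xs=a$ ($x,y\in X$, $s,t\in S$, $a\in A$); a solution in $B\supseteq A$ is a family $(b_x)$ in $B$ satisfying all equations; $\Sigma$ is consistent if it has a solution in some $S$-act containing $A$. $H(\Sigma)=\{(xu,yv):xu=yv\in\Sigma\}$, $K(\Sigma)=\{(xs,a):xs=a\in\Sigma\}$; $\rho_\Sigma$ is the congruence on $F_S(X)$ generated by $H(\Sigma)$, $\kappa_\Sigma$ that on $A\sqcup F_S(X)$ generated by $H(\Sigma)\cup K(\Sigma)$; $A(\Sigma)=(A\sqcup F_S(X))/\kappa_\Sigma$, $C(\Sigma)=F_S(X)/\rho_\Sigma$, $D(\Sigma)=\bigcup_{xs=a\in\Sigma}[xs]S\subseteq C(\Sigma)$, $\nu_\Sigma:A\to A(\Sigma)$, $a\mapsto[a]$, which is injective when $\Sigma$ is consistent, and $\theta$ is then a well-defined $S$-morphism.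 $A$ is a retract of $A(\Sigma)$ if there is an $S$-morphism $A(\Sigma)\to A$ which is the identity on $A$. *)

theory Defs
  imports Main
begin

definition is_act :: "'c set \<Rightarrow> ('c \<Rightarrow> 's::monoid_mult \<Rightarrow> 'c) \<Rightarrow> bool" where
  "is_act A f \<longleftrightarrow> (\<forall>a\<in>A. \<forall>s. f a s \<in> A) \<and> (\<forall>a\<in>A. f a 1 = a)
      \<and> (\<forall>a\<in>A. \<forall>s t. f a (s * t) = f (f a s) t)"

text \<open>S-morphisms between S-acts (only their values on the carrier matter).\<close>
definition is_morph :: "'c set \<Rightarrow> ('c \<Rightarrow> 's \<Rightarrow> 'c) \<Rightarrow> 'd set \<Rightarrow> ('d \<Rightarrow> 's \<Rightarrow> 'd)
    \<Rightarrow> ('c \<Rightarrow> 'd) \<Rightarrow> bool" where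
  "is_morph A f B g h \<longleftrightarrow> (\<forall>a\<in>A. h a \<in> B) \<and> (\<forall>a\<in>A. \<forall>s. h (f a s) = g (h a) s)"

text \<open>EqV x s y t stands for xs = yt (x = y allowed, giving xs = xt); EqC x s a for xs = a.\<close>
datatype ('x, 's, 'a) eqn = EqV 'x 's 'x 's | EqC 'x 's 'a

definition eqns_over :: "'a set \<Rightarrow> 'x set \<Rightarrow> ('x, 's, 'a) eqn set \<Rightarrow> bool" where
  "eqns_over A X \<Sigma> \<longleftrightarrow> (\<forall>e\<in>\<Sigma>. case e of EqV x s y t \<Rightarrow> x \<in> X \<and> y \<in> X
                                     | EqC x s a \<Rightarrow> x \<in> X \<and> a \<in> A)"

text \<open>A solution in an act B into which A is embedded by e (e identifies A with a subact of B).\<close>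
definition is_solution :: "'b set \<Rightarrow> ('b \<Rightarrow> 's \<Rightarrow> 'b) \<Rightarrow> ('a \<Rightarrow> 'b) \<Rightarrow> 'x set
    \<Rightarrow> ('x, 's, 'a) eqn set \<Rightarrow> ('x \<Rightarrow> 'b) \<Rightarrow> bool" where
  "is_solution B g e X \<Sigma> b \<longleftrightarrow> (\<forall>x\<in>X. b x \<in> B)
     \<and> (\<forall>x s y t. EqV x s y t \<in> \<Sigma> \<longrightarrow> g (b x) s = g (b y) t)
     \<and> (\<forall>x s a. EqC x s a \<in> \<Sigma> \<longrightarrow> g (b x) s = e a)"

definition free_act :: "'x set \<Rightarrow> ('x \<times> 's) set" where
  "free_act X = X \<times> UNIV"

definition free_action :: "('x \<times> 's::monoid_mult) \<Rightarrow> 's \<Rightarrow> ('x \<times> 's)" where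
  "free_action p t = (fst p, snd p * t)"

definition sum_carrier :: "'a set \<Rightarrow> 'x set \<Rightarrow> ('a + ('x \<times> 's)) set" where
  "sum_carrier A X = Inl ` A \<union> Inr ` free_act X"

fun sum_action :: "('a \<Rightarrow> 's::monoid_mult \<Rightarrow> 'a) \<Rightarrow> ('a + ('x \<times> 's)) \<Rightarrow> 's \<Rightarrow> ('a + ('x \<times> 's))" where
  "sum_action f (Inl a) s = Inl (f a s)"
| "sum_action f (Inr p) s = Inr (free_action p s)"

inductive_set cong_gen :: "'c set \<Rightarrow> ('c \<Rightarrow> 's \<Rightarrow> 'c) \<Rightarrow> ('c \<times> 'c) set \<Rightarrow> ('c \<times> 'c) set"
  for C f R where
  base: "(p, q) \<in> R \<Longrightarrow> p \<in> C \<Longrightarrow> q \<in> C \<Longrightarrow> (p, q) \<in> cong_gen C f R"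
| refl: "p \<in> C \<Longrightarrow> (p, p) \<in> cong_gen C f R"
| sym: "(p, q) \<in> cong_gen C f R \<Longrightarrow> (q, p) \<in> cong_gen C f R"
| trans: "(p, q) \<in> cong_gen C f R \<Longrightarrow> (q, r) \<in> cong_gen C f R \<Longrightarrow> (p, r) \<in> cong_gen C f R"
| compat: "(p, q) \<in> cong_gen C f R \<Longrightarrow> (f p s, f q s) \<in> cong_gen C f R"

definition quot_action :: "('c \<times> 'c) set \<Rightarrow> ('c \<Rightarrow> 's \<Rightarrow> 'c) \<Rightarrow> 'c set \<Rightarrow> 's \<Rightarrow> 'c set" where
  "quot_action \<rho> f Q s = \<rho> `` {f (SOME p. p \<in> Q) s}"

definition H_rel :: "('x, 's, 'a) eqn set \<Rightarrow> (('x \<times> 's) \<times> ('x \<times> 's)) set" where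
  "H_rel \<Sigma> = {((x, u), (y, v)) | x u y v. EqV x u y v \<in> \<Sigma>}"

definition K_rel :: "('x, 's, 'a) eqn set \<Rightarrow> (('a + ('x \<times> 's)) \<times> ('a + ('x \<times> 's))) set" where
  "K_rel \<Sigma> = {(Inr (x, s), Inl a) | x s a. EqC x s a \<in> \<Sigma>}"

definition rho :: "'x set \<Rightarrow> ('x, 's::monoid_mult, 'a) eqn set \<Rightarrow> (('x \<times> 's) \<times> ('x \<times> 's)) set" where
  "rho X \<Sigma> = cong_gen (free_act X) free_action (H_rel \<Sigma>)"

definition kappa :: "'a set \<Rightarrow> ('a \<Rightarrow> 's::monoid_mult \<Rightarrow> 'a) \<Rightarrow> 'x set \<Rightarrow> ('x, 's, 'a) eqn set
    \<Rightarrow> (('a + ('x \<times> 's)) \<times> ('a + ('x \<times> 's))) set" where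
  "kappa A f X \<Sigma> = cong_gen (sum_carrier A X) (sum_action f)
      ((\<lambda>(p, q). (Inr p, Inr q)) ` H_rel \<Sigma> \<union> K_rel \<Sigma>)"

definition A_Sig :: "'a set \<Rightarrow> ('a \<Rightarrow> 's::monoid_mult \<Rightarrow> 'a) \<Rightarrow> 'x set \<Rightarrow> ('x, 's, 'a) eqn set
    \<Rightarrow> ('a + ('x \<times> 's)) set set" where
  "A_Sig A f X \<Sigma> = sum_carrier A X // kappa A f X \<Sigma>"

definition A_Sig_action :: "'a set \<Rightarrow> ('a \<Rightarrow> 's::monoid_mult \<Rightarrow> 'a) \<Rightarrow> 'x set \<Rightarrow> ('x, 's, 'a) eqn set
    \<Rightarrow> ('a + ('x \<times> 's)) set \<Rightarrow> 's \<Rightarrow> ('a + ('x \<times> 's)) set" where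
  "A_Sig_action A f X \<Sigma> = quot_action (kappa A f X \<Sigma>) (sum_action f)"

definition nu :: "'a set \<Rightarrow> ('a \<Rightarrow> 's::monoid_mult \<Rightarrow> 'a) \<Rightarrow> 'x set \<Rightarrow> ('x, 's, 'a) eqn set
    \<Rightarrow> 'a \<Rightarrow> ('a + ('x \<times> 's)) set" where
  "nu A f X \<Sigma> a = kappa A f X \<Sigma> `` {Inl a}"

definition C_Sig :: "'x set \<Rightarrow> ('x, 's::monoid_mult, 'a) eqn set \<Rightarrow> ('x \<times> 's) set set" where
  "C_Sig X \<Sigma> = free_act X // rho X \<Sigma>"

definition C_Sig_action :: "'x set \<Rightarrow> ('x, 's::monoid_mult, 'a) eqn set \<Rightarrow> ('x \<times> 's) set \<Rightarrow> 's \<Rightarrow> ('x \<times> 's) set" where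
  "C_Sig_action X \<Sigma> = quot_action (rho X \<Sigma>) free_action"

text \<open>D(\<Sigma>) = union of the cyclic subacts [xs]S for xs = a in \<Sigma>; note [xs]v = [x(sv)].\<close>
definition D_Sig :: "'x set \<Rightarrow> ('x, 's::monoid_mult, 'a) eqn set \<Rightarrow> ('x \<times> 's) set set" where
  "D_Sig X \<Sigma> = {rho X \<Sigma> `` {(x, s * v)} | x s a v. EqC x s a \<in> \<Sigma>}"

text \<open>theta : D(\<Sigma>) \<rightarrow> A, ([xs]v)theta = av for xs = a in \<Sigma> (well defined for consistent \<Sigma>).\<close>
definition theta :: "('a \<Rightarrow> 's::monoid_mult \<Rightarrow> 'a) \<Rightarrow> 'x set \<Rightarrow> ('x, 's, 'a) eqn set
    \<Rightarrow> ('x \<times> 's) set \<Rightarrow> 'a" where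
  "theta f X \<Sigma> d = (SOME r. \<exists>x s a v. EqC x s a \<in> \<Sigma> \<and> d = rho X \<Sigma> `` {(x, s * v)} \<and> r = f a v)"

end

theory Submission
  imports Defs
begin

lemma cg_carrier:
  assumes "(p,q) \<in> cong_gen C f R" "\<forall>p\<in>C. \<forall>s. f p s \<in> C"
  shows "p \<in> C \<and> q \<in> C"
  using assms by (induction rule: cong_gen.induct) auto

lemma cg_equiv:
  assumes "\<forall>p\<in>C. \<forall>s. f p s \<in> C"
  shows "equiv C (cong_gen C f R)"
  unfolding equiv_def refl_on_def sym_def trans_def
  using cg_carrier[OF _ assms] by (auto intro: cong_gen.intros)

lemma cg_inv:
  assumes "(p,q) \<in> cong_gen C f R" "\<forall>p\<in>C. \<forall>s. f p s \<in> C"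
    "\<And>p q. (p,q)\<in>R \<Longrightarrow> p\<in>C \<Longrightarrow> q\<in>C \<Longrightarrow> h p = h q"
    "\<And>p s. p\<in>C \<Longrightarrow> h (f p s) = F (h p) s"
  shows "h p = h q"
  using assms(1)
proof (induction rule: cong_gen.induct)
  case (compat p q s)
  then have "p \<in> C" "q \<in> C" using cg_carrier[OF _ assms(2)] by auto
  then have "h (f p s) = F (h p) s" "h (f q s) = F (h q) s" using assms(4) by blast+
  then show ?case using compat.IH by simp
next
  case (base p q) then show ?case using assms(3) by blast
qed auto

lemma some_class:
  assumes "equiv C r" "p \<in> C"
  shows "(p, SOME p'. p' \<in> r``{p}) \<in> r"
proof -
  have "p \<in> r``{p}" using assms by (auto simp: equiv_def refl_on_def)
  then have "(SOME p'. p' \<in> r``{p}) \<in> r``{p}" by (rule someI)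
  then show ?thesis by simp
qed

lemma cg_class_action:
  assumes "\<forall>p\<in>C. \<forall>s. f p s \<in> C" "p \<in> C"
  shows "quot_action (cong_gen C f R) f (cong_gen C f R `` {p}) s = cong_gen C f R `` {f p s}"
proof -
  have eq: "equiv C (cong_gen C f R)" by (rule cg_equiv[OF assms(1)])
  have "(p, SOME p'. p' \<in> cong_gen C f R``{p}) \<in> cong_gen C f R"
    by (rule some_class[OF eq assms(2)])
  then have "(f p s, f (SOME p'. p' \<in> cong_gen C f R``{p}) s) \<in> cong_gen C f R"
    by (rule cong_gen.compat)
  then have "cong_gen C f R `` {f p s} = cong_gen C f R `` {f (SOME p'. p' \<in> cong_gen C f R``{p}) s}"
    by (rule equiv_class_eq[OF eq])
  then show ?thesis unfolding quot_action_def by simp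
qed

lemma cg_some:
  assumes "\<forall>p\<in>C. \<forall>s. f p s \<in> C" "p \<in> C"
    "\<And>p q. (p,q)\<in>R \<Longrightarrow> p\<in>C \<Longrightarrow> q\<in>C \<Longrightarrow> h p = h q"
    "\<And>p s. p\<in>C \<Longrightarrow> h (f p s) = F (h p) s"
  shows "h (SOME p'. p' \<in> cong_gen C f R``{p}) = h p"
proof -
  have "(p, SOME p'. p' \<in> cong_gen C f R``{p}) \<in> cong_gen C f R"
    by (rule some_class[OF cg_equiv[OF assms(1)] assms(2)])
  then have "h p = h (SOME p'. p' \<in> cong_gen C f R``{p})"
    by (rule cg_inv[where h=h and F=F, OF _ assms(1) assms(3) assms(4)])
  then show ?thesis by (rule HOL.sym)
qed

lemma sum_closed:
  assumes "is_act A f"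
  shows "\<forall>p\<in>sum_carrier A X. \<forall>s. sum_action f p s \<in> sum_carrier A X"
  using assms unfolding is_act_def sum_carrier_def free_act_def by (auto simp: free_action_def)

lemma free_closed: "\<forall>p\<in>free_act X. \<forall>s. free_action p s \<in> free_act X"
  unfolding free_act_def free_action_def by auto

lemma quotE:
  assumes "Q \<in> C // r"
  obtains p where "p \<in> C" "Q = r``{p}"
  using assms by (auto elim: quotientE)

lemma R_cases:
  assumes "(p,q) \<in> (\<lambda>(p, q). (Inr p, Inr q)) ` H_rel \<Sigma> \<union> K_rel \<Sigma>"
  shows "(\<exists>x u y v. p = Inr (x,u) \<and> q = Inr (y,v) \<and> EqV x u y v \<in> \<Sigma>)
      \<or> (\<exists>x s a. p = Inr (x,s) \<and> q = Inl a \<and> EqC x s a \<in> \<Sigma>)"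
proof -
  from assms consider "(p,q) \<in> (\<lambda>(p, q). (Inr p, Inr q)) ` H_rel \<Sigma>" | "(p,q) \<in> K_rel \<Sigma>" by blast
  then show ?thesis
  proof cases
    case 1
    then obtain z where z: "z \<in> H_rel \<Sigma>" "(p,q) = (case z of (a,b) \<Rightarrow> (Inr a, Inr b))" by blast
    then obtain x u y v where "z = ((x,u),(y,v))" "EqV x u y v \<in> \<Sigma>" unfolding H_rel_def by blast
    with z show ?thesis by simp
  next
    case 2
    then show ?thesis unfolding K_rel_def by blast
  qed
qed

lemma p1f:
  fixes f :: "'a \<Rightarrow> 's::monoid_mult \<Rightarrow> 'a" and \<Sigma> :: "('x, 's, 'a) eqn set"
  assumes actA: "is_act A f" and sol: "is_solution A f id X \<Sigma> c"
  shows "\<exists>\<phi>. is_morph (A_Sig A f X \<Sigma>) (A_Sig_action A f X \<Sigma>) A f \<phi>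
                   \<and> (\<forall>a\<in>A. \<phi> (nu A f X \<Sigma> a) = a)"
proof -
  define C where "C = (sum_carrier A X :: ('a + 'x \<times> 's) set)"
  define R where "R = (\<lambda>(p, q). (Inr p, Inr q)) ` H_rel \<Sigma> \<union> K_rel \<Sigma>"
  define h where "h = case_sum id (\<lambda>(x,s). f (c x) s)"
  have cl: "\<forall>p\<in>C. \<forall>s. sum_action f p s \<in> C" unfolding C_def by (rule sum_closed[OF actA])
  have cA: "\<And>x. x \<in> X \<Longrightarrow> c x \<in> A" using sol unfolding is_solution_def by auto
  have sv: "f (c x) u = f (c y) v" if "EqV x u y v \<in> \<Sigma>" for x u y v
    using sol that unfolding is_solution_def by simp
  have sc: "f (c x) s = a" if "EqC x s a \<in> \<Sigma>" for x s a
    using sol that unfolding is_solution_def by simp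
  have fcl: "f a s \<in> A" if "a \<in> A" for a s using actA that unfolding is_act_def by blast
  have fmul: "f a (s * t) = f (f a s) t" if "a \<in> A" for a s t
    using actA that unfolding is_act_def by blast
  have hR: "h p = h q" if hpq: "(p,q)\<in>R" for p q
  proof -
    consider (H) x u y v where "p = Inr (x,u)" "q = Inr (y,v)" "EqV x u y v \<in> \<Sigma>"
      | (K) x s a where "p = Inr (x,s)" "q = Inl a" "EqC x s a \<in> \<Sigma>"
      using R_cases[of p q \<Sigma>] hpq unfolding R_def by blast
    then show ?thesis
    proof cases
      case H then show ?thesis using sv unfolding h_def by simp
    next
      case K then show ?thesis using sc unfolding h_def by simp
    qed
  qed
  have pC: "(\<exists>a. p = Inl a \<and> a \<in> A) \<or> (\<exists>x t. p = Inr (x,t) \<and> x \<in> X)" if "p \<in> C" for p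
    using that unfolding C_def sum_carrier_def free_act_def by blast
  have hC: "h (sum_action f p s) = f (h p) s" if "p \<in> C" for p s
    using pC[OF that]
  proof
    assume "\<exists>a. p = Inl a \<and> a \<in> A"
    then show ?thesis unfolding h_def by auto
  next
    assume "\<exists>x t. p = Inr (x,t) \<and> x \<in> X"
    then obtain x t where "p = Inr (x,t)" "x \<in> X" by blast
    then show ?thesis unfolding h_def using fmul[OF cA] by (simp add: free_action_def)
  qed
  have hA: "h p \<in> A" if "p \<in> C" for p
    using pC[OF that] cA fcl unfolding h_def by auto
  have K: "kappa A f X \<Sigma> = cong_gen C (sum_action f) R" unfolding kappa_def C_def R_def by simp
  have sm: "h (SOME p'. p' \<in> kappa A f X \<Sigma>``{p}) = h p" if "p \<in> C" for p
    unfolding K by (rule cg_some[where h=h and F=f and R=R, OF cl that hR hC])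
  define \<phi> where "\<phi> Q = h (SOME p. p \<in> Q)" for Q
  have "is_morph (A_Sig A f X \<Sigma>) (A_Sig_action A f X \<Sigma>) A f \<phi>"
    unfolding is_morph_def
  proof (intro conjI ballI allI)
    fix Q assume "Q \<in> A_Sig A f X \<Sigma>"
    then obtain p where p: "p \<in> C" "Q = kappa A f X \<Sigma> `` {p}"
      unfolding A_Sig_def C_def by (erule quotE)
    then show "\<phi> Q \<in> A" using sm hA unfolding \<phi>_def by simp
    fix s
    have "A_Sig_action A f X \<Sigma> Q s = kappa A f X \<Sigma> `` {sum_action f p s}"
      unfolding A_Sig_action_def p(2) K using cg_class_action[OF cl p(1)] by blast
    moreover have "sum_action f p s \<in> C" using cl p by auto
    ultimately show "\<phi> (A_Sig_action A f X \<Sigma> Q s) = f (\<phi> Q) s"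
      using sm p hC unfolding \<phi>_def by simp
  qed
  moreover have "\<forall>a\<in>A. \<phi> (nu A f X \<Sigma> a) = a"
  proof
    fix a assume "a \<in> A"
    then have "Inl a \<in> C" unfolding C_def sum_carrier_def by auto
    then show "\<phi> (nu A f X \<Sigma> a) = a" using sm unfolding \<phi>_def nu_def h_def by simp
  qed
  ultimately show ?thesis by blast
qed


lemma p1b:
  fixes f :: "'a \<Rightarrow> 's::monoid_mult \<Rightarrow> 'a" and \<Sigma> :: "('x, 's, 'a) eqn set"
  assumes actA: "is_act A f" and over: "eqns_over A X \<Sigma>"
    and mor: "is_morph (A_Sig A f X \<Sigma>) (A_Sig_action A f X \<Sigma>) A f \<phi>"
    and ret: "\<forall>a\<in>A. \<phi> (nu A f X \<Sigma> a) = a"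
  shows "\<exists>c. is_solution A f id X \<Sigma> c"
proof -
  define C where "C = (sum_carrier A X :: ('a + 'x \<times> 's) set)"
  define R where "R = (\<lambda>(p, q). (Inr p, Inr q)) ` H_rel \<Sigma> \<union> K_rel \<Sigma>"
  define K where "K = kappa A f X \<Sigma>"
  have cl: "\<forall>p\<in>C. \<forall>s. sum_action f p s \<in> C" unfolding C_def by (rule sum_closed[OF actA])
  have KK: "K = cong_gen C (sum_action f) R" unfolding K_def kappa_def C_def R_def by simp
  have eq: "equiv C K" unfolding KK by (rule cg_equiv[OF cl])
  have inC: "Inr (x,t) \<in> C" if "x \<in> X" for x t
    using that unfolding C_def sum_carrier_def free_act_def by blast
  have inCl: "Inl a \<in> C" if "a \<in> A" for a
    using that unfolding C_def sum_carrier_def by blast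
  have cls: "K``{p} \<in> A_Sig A f X \<Sigma>" if "p \<in> C" for p
    using that unfolding A_Sig_def K_def C_def by (rule quotientI)
  have act: "A_Sig_action A f X \<Sigma> (K``{p}) s = K``{sum_action f p s}" if "p \<in> C" for p s
    unfolding A_Sig_action_def K_def[symmetric] unfolding KK by (rule cg_class_action[OF cl that])
  have morA: "\<phi> Q \<in> A" if "Q \<in> A_Sig A f X \<Sigma>" for Q using mor that unfolding is_morph_def by blast
  have morC: "\<phi> (A_Sig_action A f X \<Sigma> Q s) = f (\<phi> Q) s" if "Q \<in> A_Sig A f X \<Sigma>" for Q s
    using mor that unfolding is_morph_def by blast
  define c where "c x = \<phi> (K``{Inr (x,1)})" for x
  have cx: "f (c x) s = \<phi> (K``{Inr (x,s)})" if "x \<in> X" for x s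
  proof -
    have "f (c x) s = \<phi> (A_Sig_action A f X \<Sigma> (K``{Inr (x,1)}) s)"
      unfolding c_def using morC[OF cls[OF inC[OF that]]] by simp
    also have "\<dots> = \<phi> (K``{Inr (x,s)})" using act[OF inC[OF that]] by (simp add: free_action_def)
    finally show ?thesis .
  qed
  have "is_solution A f id X \<Sigma> c"
    unfolding is_solution_def
  proof (intro conjI allI impI ballI)
    fix x assume "x \<in> X" then show "c x \<in> A" unfolding c_def using morA cls inC by blast
  next
    fix x s y t assume e: "EqV x s y t \<in> \<Sigma>"
    then have xy: "x \<in> X" "y \<in> X" using over unfolding eqns_over_def by force+
    have "(Inr (x,s), Inr (y,t)) \<in> R" unfolding R_def H_rel_def using e by force
    then have "(Inr (x,s), Inr (y,t)) \<in> K" unfolding KK using inC xy by (blast intro: cong_gen.base)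
    then have "K``{Inr (x,s)} = K``{Inr (y,t)}" by (rule equiv_class_eq[OF eq])
    then show "f (c x) s = f (c y) t" using cx xy by simp
  next
    fix x s a assume e: "EqC x s a \<in> \<Sigma>"
    then have xa: "x \<in> X" "a \<in> A" using over unfolding eqns_over_def by force+
    have "(Inr (x,s), Inl a) \<in> R" unfolding R_def K_rel_def using e by blast
    then have "(Inr (x,s), Inl a) \<in> K" unfolding KK using inC inCl xa by (blast intro: cong_gen.base)
    then have "K``{Inr (x,s)} = K``{Inl a}" by (rule equiv_class_eq[OF eq])
    then show "f (c x) s = id a" using cx xa ret unfolding nu_def K_def by simp
  qed
  then show ?thesis by blast
qed


lemma theta_eq:
  assumes "d \<in> D_Sig X \<Sigma>"
    and "\<And>x s a v. EqC x s a \<in> \<Sigma> \<Longrightarrow> d = rho X \<Sigma> `` {(x, s * v)} \<Longrightarrow> f a v = z"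
  shows "theta f X \<Sigma> d = z"
proof -
  from assms(1) obtain x s a v where "EqC x s a \<in> \<Sigma>" "d = rho X \<Sigma> `` {(x, s * v)}"
    unfolding D_Sig_def by blast
  then have ex: "\<exists>r. \<exists>x s a v. EqC x s a \<in> \<Sigma> \<and> d = rho X \<Sigma> `` {(x, s * v)} \<and> r = f a v" by blast
  have "\<exists>x s a v. EqC x s a \<in> \<Sigma> \<and> d = rho X \<Sigma> `` {(x, s * v)} \<and> theta f X \<Sigma> d = f a v"
    unfolding theta_def by (rule someI_ex[OF ex])
  then show ?thesis using assms(2) by blast
qed

lemma free_inv:
  fixes g :: "'b \<Rightarrow> 's::monoid_mult \<Rightarrow> 'b" and \<Sigma> :: "('x, 's, 'a) eqn set"
  assumes actB: "is_act B g" and bB: "\<And>x. x \<in> X \<Longrightarrow> b x \<in> B"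
    and sv: "\<And>x u y v. EqV x u y v \<in> \<Sigma> \<Longrightarrow> g (b x) u = g (b y) v"
    and r: "(p,q) \<in> rho X \<Sigma>"
  shows "g (b (fst p)) (snd p) = g (b (fst q)) (snd q)"
proof -
  define h where "h = (\<lambda>(x,t). g (b x) t)"
  have hR: "h p = h q" if "(p,q) \<in> H_rel \<Sigma>" for p q
    using that sv unfolding H_rel_def h_def by auto
  have hC: "h (free_action p s) = g (h p) s" if hp: "p \<in> free_act X" for p s
  proof -
    obtain x t where "p = (x,t)" "x \<in> X" using hp unfolding free_act_def by auto
    then show ?thesis using actB bB unfolding h_def is_act_def free_action_def by simp
  qed
  have "h p = h q"
    by (rule cg_inv[where h=h and F=g, OF r[unfolded rho_def] free_closed hR hC])
  then show ?thesis unfolding h_def by (simp add: case_prod_beta)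
qed

lemma p2f:
  fixes f :: "'a \<Rightarrow> 's::monoid_mult \<Rightarrow> 'a" and \<Sigma> :: "('x, 's, 'a) eqn set"
  assumes actA: "is_act A f" and over: "eqns_over A X \<Sigma>" and sol: "is_solution A f id X \<Sigma> c"
  shows "\<exists>\<psi>. is_morph (C_Sig X \<Sigma>) (C_Sig_action X \<Sigma>) A f \<psi>
                   \<and> (\<forall>d\<in>D_Sig X \<Sigma>. \<psi> d = theta f X \<Sigma> d)"
proof -
  define C where "C = (free_act X :: ('x \<times> 's) set)"
  define P where "P = rho X \<Sigma>"
  define h where "h = (\<lambda>(x,t). f (c x) t)"
  have cl: "\<forall>p\<in>C. \<forall>s. free_action p s \<in> C" unfolding C_def by (rule free_closed)
  have PP: "P = cong_gen C free_action (H_rel \<Sigma>)" unfolding P_def rho_def C_def by simp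
  have eq: "equiv C P" unfolding PP by (rule cg_equiv[OF cl])
  have cA: "\<And>x. x \<in> X \<Longrightarrow> c x \<in> A" using sol unfolding is_solution_def by auto
  have sv: "f (c x) u = f (c y) v" if "EqV x u y v \<in> \<Sigma>" for x u y v
    using sol that unfolding is_solution_def by simp
  have sc: "f (c x) s = a" if "EqC x s a \<in> \<Sigma>" for x s a
    using sol that unfolding is_solution_def by simp
  have fcl: "f a s \<in> A" if "a \<in> A" for a s using actA that unfolding is_act_def by blast
  have fmul: "f a (s * t) = f (f a s) t" if "a \<in> A" for a s t
    using actA that unfolding is_act_def by blast
  have hR: "h p = h q" if "(p,q) \<in> H_rel \<Sigma>" for p q
    using that sv unfolding H_rel_def h_def by auto
  have hC: "h (free_action p s) = f (h p) s" if hp: "p \<in> C" for p s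
  proof -
    obtain x t where "p = (x,t)" "x \<in> X" using hp unfolding C_def free_act_def by auto
    then show ?thesis using fmul[OF cA] unfolding h_def free_action_def by simp
  qed
  have hA: "h p \<in> A" if hp: "p \<in> C" for p
  proof -
    obtain x t where "p = (x,t)" "x \<in> X" using hp unfolding C_def free_act_def by auto
    then show ?thesis using fcl[OF cA] unfolding h_def by simp
  qed
  have sm: "h (SOME p'. p' \<in> P``{p}) = h p" if "p \<in> C" for p
    unfolding PP by (rule cg_some[where h=h and F=f, OF cl that hR hC])
  define \<psi> where "\<psi> Q = h (SOME p. p \<in> Q)" for Q
  have "is_morph (C_Sig X \<Sigma>) (C_Sig_action X \<Sigma>) A f \<psi>"
    unfolding is_morph_def
  proof (intro conjI ballI allI)
    fix Q assume "Q \<in> C_Sig X \<Sigma>"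
    then obtain p where p: "p \<in> C" "Q = P `` {p}"
      unfolding C_Sig_def C_def P_def by (erule quotE)
    then show "\<psi> Q \<in> A" using sm hA unfolding \<psi>_def by simp
    fix s
    have "C_Sig_action X \<Sigma> Q s = P `` {free_action p s}"
      unfolding C_Sig_action_def P_def[symmetric] p(2) PP using cg_class_action[OF cl p(1)] by blast
    moreover have "free_action p s \<in> C" using cl p by auto
    ultimately show "\<psi> (C_Sig_action X \<Sigma> Q s) = f (\<psi> Q) s"
      using sm p hC unfolding \<psi>_def by simp
  qed
  moreover have "\<forall>d\<in>D_Sig X \<Sigma>. \<psi> d = theta f X \<Sigma> d"
  proof
    fix d assume d: "d \<in> D_Sig X \<Sigma>"
    show "\<psi> d = theta f X \<Sigma> d"
    proof (rule HOL.sym, rule theta_eq[OF d])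
      fix x s a v assume e: "EqC x s a \<in> \<Sigma>" and dd: "d = rho X \<Sigma> `` {(x, s * v)}"
      have x: "x \<in> X" using e over unfolding eqns_over_def by force
      then have "(x, s*v) \<in> C" unfolding C_def free_act_def by simp
      then have "\<psi> d = h (x, s*v)" using sm dd unfolding \<psi>_def P_def by simp
      also have "\<dots> = f (f (c x) s) v" unfolding h_def using fmul[OF cA[OF x]] by simp
      also have "\<dots> = f a v" using sc[OF e] by simp
      finally show "f a v = \<psi> d" by simp
    qed
  qed
  ultimately show ?thesis by blast
qed


lemma p2b:
  fixes f :: "'a \<Rightarrow> 's::monoid_mult \<Rightarrow> 'a" and \<Sigma> :: "('x, 's, 'a) eqn set"
    and g :: "'b \<Rightarrow> 's \<Rightarrow> 'b"
  assumes actA: "is_act A f" and over: "eqns_over A X \<Sigma>"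
    and actB: "is_act B g" and emb: "is_morph A f B g e" and emb_inj: "inj_on e A"
    and consistent: "is_solution B g e X \<Sigma> b"
    and mor: "is_morph (C_Sig X \<Sigma>) (C_Sig_action X \<Sigma>) A f \<psi>"
    and th: "\<forall>d\<in>D_Sig X \<Sigma>. \<psi> d = theta f X \<Sigma> d"
  shows "\<exists>c. is_solution A f id X \<Sigma> c"
proof -
  define C where "C = (free_act X :: ('x \<times> 's) set)"
  define P where "P = rho X \<Sigma>"
  have cl: "\<forall>p\<in>C. \<forall>s. free_action p s \<in> C" unfolding C_def by (rule free_closed)
  have PP: "P = cong_gen C free_action (H_rel \<Sigma>)" unfolding P_def rho_def C_def by simp
  have eq: "equiv C P" unfolding PP by (rule cg_equiv[OF cl])
  have inC: "(x,t) \<in> C" if "x \<in> X" for x t using that unfolding C_def free_act_def by simp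
  have cls: "P``{p} \<in> C_Sig X \<Sigma>" if "p \<in> C" for p
    using that unfolding C_Sig_def P_def C_def by (rule quotientI)
  have act: "C_Sig_action X \<Sigma> (P``{p}) s = P``{free_action p s}" if "p \<in> C" for p s
    unfolding C_Sig_action_def P_def[symmetric] unfolding PP by (rule cg_class_action[OF cl that])
  have morA: "\<psi> Q \<in> A" if "Q \<in> C_Sig X \<Sigma>" for Q using mor that unfolding is_morph_def by blast
  have morC: "\<psi> (C_Sig_action X \<Sigma> Q s) = f (\<psi> Q) s" if "Q \<in> C_Sig X \<Sigma>" for Q s
    using mor that unfolding is_morph_def by blast
  have bB: "\<And>x. x \<in> X \<Longrightarrow> b x \<in> B" using consistent unfolding is_solution_def by auto
  have bv: "g (b x) u = g (b y) v" if "EqV x u y v \<in> \<Sigma>" for x u y v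
    using consistent that unfolding is_solution_def by simp
  have bc: "g (b x) s = e a" if "EqC x s a \<in> \<Sigma>" for x s a
    using consistent that unfolding is_solution_def by simp
  have fcl: "f a s \<in> A" if "a \<in> A" for a s using actA that unfolding is_act_def by blast
  have gmul: "g a (s * t) = g (g a s) t" if "a \<in> B" for a s t
    using actB that unfolding is_act_def by blast
  have emor: "e (f a s) = g (e a) s" if "a \<in> A" for a s using emb that unfolding is_morph_def by blast
  define c where "c x = \<psi> (P``{(x,1)})" for x
  have cx: "f (c x) s = \<psi> (P``{(x,s)})" if "x \<in> X" for x s
  proof -
    have "f (c x) s = \<psi> (C_Sig_action X \<Sigma> (P``{(x,1)}) s)"
      unfolding c_def using morC[OF cls[OF inC[OF that]]] by simp
    also have "\<dots> = \<psi> (P``{(x,s)})" using act[OF inC[OF that]] by (simp add: free_action_def)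
    finally show ?thesis .
  qed
  have "is_solution A f id X \<Sigma> c"
    unfolding is_solution_def
  proof (intro conjI allI impI ballI)
    fix x assume "x \<in> X" then show "c x \<in> A" unfolding c_def using morA cls inC by blast
  next
    fix x s y t assume e: "EqV x s y t \<in> \<Sigma>"
    then have xy: "x \<in> X" "y \<in> X" using over unfolding eqns_over_def by force+
    have "((x,s), (y,t)) \<in> H_rel \<Sigma>" unfolding H_rel_def using e by force
    then have "((x,s), (y,t)) \<in> P" unfolding PP using inC xy by (blast intro: cong_gen.base)
    then have "P``{(x,s)} = P``{(y,t)}" by (rule equiv_class_eq[OF eq])
    then show "f (c x) s = f (c y) t" using cx xy by simp
  next
    fix x s a assume ea: "EqC x s a \<in> \<Sigma>"
    then have xa: "x \<in> X" "a \<in> A" using over unfolding eqns_over_def by force+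
    have dD: "P``{(x, s * 1)} \<in> D_Sig X \<Sigma>" unfolding D_Sig_def P_def using ea by blast
    have "theta f X \<Sigma> (P``{(x, s * 1)}) = a"
    proof (unfold P_def, rule theta_eq[OF dD[unfolded P_def]])
      fix x' s' a' v' assume ea': "EqC x' s' a' \<in> \<Sigma>"
        and dd: "rho X \<Sigma> `` {(x, s * 1)} = rho X \<Sigma> `` {(x', s' * v')}"
      have xa': "x' \<in> X" "a' \<in> A" using ea' over unfolding eqns_over_def by force+
      have "((x, s * 1), (x', s' * v')) \<in> P"
        using eq_equiv_class[OF dd[folded P_def] eq inC[OF xa'(1)]] .
      then have "g (b x) s = g (b x') (s' * v')"
        using free_inv[OF actB bB bv, where p="(x, s*1)" and q="(x', s'*v')"] unfolding P_def by simp
      also have "\<dots> = g (g (b x') s') v'" using gmul[OF bB[OF xa'(1)]] .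
      also have "\<dots> = e (f a' v')" using bc[OF ea'] emor[OF xa'(2)] by simp
      finally have "e a = e (f a' v')" using bc[OF ea] by simp
      then show "f a' v' = a" using emb_inj xa(2) fcl[OF xa'(2)] unfolding inj_on_def by metis
    qed
    then show "f (c x) s = id a" using cx[OF xa(1)] th dD by simp
  qed
  then show ?thesis by blast
qed

theorem mainTheorem11:
  fixes A :: "'a set" and f :: "'a \<Rightarrow> 's::monoid_mult \<Rightarrow> 'a"
    and X :: "'x set" and \<Sigma> :: "('x, 's, 'a) eqn set"
    and B :: "'b set" and g :: "'b \<Rightarrow> 's \<Rightarrow> 'b" and e :: "'a \<Rightarrow> 'b" and b :: "'x \<Rightarrow> 'b"
  assumes actA: "is_act A f"
    and over: "eqns_over A X \<Sigma>"
    and actB: "is_act B g"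
    and emb: "is_morph A f B g e" and emb_inj: "inj_on e A"
    and consistent: "is_solution B g e X \<Sigma> b"
  shows "((\<exists>c. is_solution A f id X \<Sigma> c)
          \<longleftrightarrow> (\<exists>\<phi>. is_morph (A_Sig A f X \<Sigma>) (A_Sig_action A f X \<Sigma>) A f \<phi>
                   \<and> (\<forall>a\<in>A. \<phi> (nu A f X \<Sigma> a) = a)))
       \<and> ((\<exists>c. is_solution A f id X \<Sigma> c)
          \<longleftrightarrow> (\<exists>\<psi>. is_morph (C_Sig X \<Sigma>) (C_Sig_action X \<Sigma>) A f \<psi>
                   \<and> (\<forall>d\<in>D_Sig X \<Sigma>. \<psi> d = theta f X \<Sigma> d)))"
proof (intro conjI iffI)
  assume "\<exists>c. is_solution A f id X \<Sigma> c"
  then obtain c where "is_solution A f id X \<Sigma> c" by blast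
  then show "\<exists>\<phi>. is_morph (A_Sig A f X \<Sigma>) (A_Sig_action A f X \<Sigma>) A f \<phi>
                   \<and> (\<forall>a\<in>A. \<phi> (nu A f X \<Sigma> a) = a)" by (rule p1f[OF actA])
next
  assume "\<exists>\<phi>. is_morph (A_Sig A f X \<Sigma>) (A_Sig_action A f X \<Sigma>) A f \<phi>
                   \<and> (\<forall>a\<in>A. \<phi> (nu A f X \<Sigma> a) = a)"
  then obtain \<phi> where "is_morph (A_Sig A f X \<Sigma>) (A_Sig_action A f X \<Sigma>) A f \<phi>"
     "\<forall>a\<in>A. \<phi> (nu A f X \<Sigma> a) = a" by blast
  then show "\<exists>c. is_solution A f id X \<Sigma> c" by (rule p1b[OF actA over])
next
  assume "\<exists>c. is_solution A f id X \<Sigma> c"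
  then obtain c where "is_solution A f id X \<Sigma> c" by blast
  then show "\<exists>\<psi>. is_morph (C_Sig X \<Sigma>) (C_Sig_action X \<Sigma>) A f \<psi>
                   \<and> (\<forall>d\<in>D_Sig X \<Sigma>. \<psi> d = theta f X \<Sigma> d)" by (rule p2f[OF actA over])
next
  assume "\<exists>\<psi>. is_morph (C_Sig X \<Sigma>) (C_Sig_action X \<Sigma>) A f \<psi>
                   \<and> (\<forall>d\<in>D_Sig X \<Sigma>. \<psi> d = theta f X \<Sigma> d)"
  then obtain \<psi> where "is_morph (C_Sig X \<Sigma>) (C_Sig_action X \<Sigma>) A f \<psi>"
     "\<forall>d\<in>D_Sig X \<Sigma>. \<psi> d = theta f X \<Sigma> d" by blast
  then show "\<exists>c. is_solution A f id X \<Sigma> c"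
    by (rule p2b[OF actA over actB emb emb_inj consistent])
qed

end
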